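(* Let $q=p^f$ be a prime power, $N>1$ an integer with $N\mid(q-1)$, $\gamma$ a primitive element of $\mathbb{F}_q$, and $C_0=\langle\gamma^N\rangle$. Assume the Gauss periods $\eta_a=\sum_{x\in\gamma^aC_0}\psi(x)$, $0\le a\le N-1$, take exactly $\ell$ distinct values $\alpha_1,\dots,\alpha_\ell$, and let $I_i=\{a\in\mathbb{Z}_N:\eta_a=\alpha_i\}$ for $1\le i\le\ell$. Then each $I_i$ is invariant under multiplication by $p$ in $\mathbb{Z}_N$. Moreover, if $m:=\gcd\{\mathrm{ord}_n(p): n>1,\ n\mid N\}\ge 2$, then there is a unique $i_0\in\{1,\dots,\ell\}$ such that $|I_{i_0}|\equiv1\pmod m$ and $|I_i|\equiv 0\pmod m$ for all $i\ne i_0$.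
   Context: $\psi$ is the canonical additive character of $\mathbb{F}_q$: $\psi(x)=\xi_p^{\mathrm{Tr}_{q/p}(x)}$. $\mathrm{ord}_n(p)$ is the multiplicative order of $p$ modulo $n$. *)

theory Defs
  imports "HOL-Analysis.Analysis" "HOL-Number_Theory.Number_Theory"
begin

definition abs_trace :: "nat \<Rightarrow> nat \<Rightarrow> 'a::field \<Rightarrow> 'a" where
  "abs_trace p f x = (\<Sum>i<f. x ^ (p ^ i))"

text \<open>The trace lies in the prime field F_p = image of 0..p-1; we identify it with
  the least natural number k whose image is the trace.\<close>
definition trace_nat :: "nat \<Rightarrow> nat \<Rightarrow> 'a::field \<Rightarrow> nat" where
  "trace_nat p f x = (LEAST k. of_nat k = abs_trace p f x)"

definition can_add_char :: "nat \<Rightarrow> nat \<Rightarrow> 'a::field \<Rightarrow> complex" where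
  "can_add_char p f x = exp (2 * pi * \<i> * of_nat (trace_nat p f x) / of_nat p)"

definition primitive_elem :: "'a::field \<Rightarrow> bool" where
  "primitive_elem g \<longleftrightarrow> range (\<lambda>k::nat. g ^ k) = UNIV - {0}"

definition cyclo_C0 :: "nat \<Rightarrow> 'a::field \<Rightarrow> 'a set" where
  "cyclo_C0 N g = range (\<lambda>j::nat. (g ^ N) ^ j)"

definition gauss_period :: "nat \<Rightarrow> nat \<Rightarrow> nat \<Rightarrow> 'a::field \<Rightarrow> nat \<Rightarrow> complex" where
  "gauss_period p f N g a = (\<Sum>x \<in> (\<lambda>c. g ^ a * c) ` cyclo_C0 N g. can_add_char p f x)"

end

theory Submission
  imports Defs
begin

lemma funpow_in:
  assumes "\<sigma> ` S \<subseteq> S" "y \<in> S" shows "(\<sigma>^^i) y \<in> S"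
  using assms by (induction i) auto

lemma funpow_cancel:
  assumes "\<sigma> ` S \<subseteq> S" "inj_on \<sigma> S" "y \<in> S" "z \<in> S" "(\<sigma>^^i) y = (\<sigma>^^i) z"
  shows "y = z"
  using assms(5)
proof (induction i)
  case 0 then show ?case by simp
next
  case (Suc i)
  have "(\<sigma>^^i) y \<in> S" "(\<sigma>^^i) z \<in> S" using funpow_in assms by metis+
  with Suc.prems assms(2) have "(\<sigma>^^i) y = (\<sigma>^^i) z" by (auto dest: inj_onD)
  then show ?case using Suc.IH by blast
qed

lemma period_exists:
  assumes "finite S" "\<sigma> ` S \<subseteq> S" "inj_on \<sigma> S" "x \<in> S"
  shows "\<exists>k>0. (\<sigma>^^k) x = x"
proof -
  have "(\<lambda>i. (\<sigma>^^i) x) ` {..card S} \<subseteq> S" using funpow_in[OF assms(2,4)] by blast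
  have "\<not> inj_on (\<lambda>i. (\<sigma>^^i) x) {..card S}"
  proof
    assume "inj_on (\<lambda>i. (\<sigma>^^i) x) {..card S}"
    then have "card {..card S} \<le> card S"
      using card_inj_on_le \<open>(\<lambda>i. (\<sigma>^^i) x) ` {..card S} \<subseteq> S\<close> assms(1) by blast
    then show False by simp
  qed
  then obtain i j where ij: "i \<le> card S" "j \<le> card S" "i \<noteq> j" "(\<sigma>^^i) x = (\<sigma>^^j) x"
    unfolding inj_on_def by auto
  have "\<exists>i j. i < j \<and> (\<sigma>^^i) x = (\<sigma>^^j) x"
  proof (cases "i < j")
    case True with ij show ?thesis by blast
  next
    case False with ij have "j < i" by simp
    with ij show ?thesis by (intro exI[of _ j] exI[of _ i]) simp
  qed
  then obtain i j where ij: "i < j" "(\<sigma>^^i) x = (\<sigma>^^j) x" by blast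
  then have "(\<sigma>^^i) x = (\<sigma>^^i) ((\<sigma>^^(j-i)) x)"
    using funpow_add[of i "j-i" \<sigma>] by (simp add: less_imp_le)
  then have "x = (\<sigma>^^(j-i)) x"
    using funpow_cancel[OF assms(2,3) assms(4) funpow_in[OF assms(2,4)]] by blast
  then show ?thesis using ij by (intro exI[of _ "j-i"]) auto
qed

lemma perm_cycles_dvd:
  assumes "finite S" "\<sigma> ` S \<subseteq> S" "inj_on \<sigma> S"
    "\<forall>x\<in>S. \<forall>k>0. (\<sigma>^^k) x = x \<longrightarrow> (m::nat) dvd k"
  shows "m dvd card S"
  using assms
proof (induction "card S" arbitrary: S rule: less_induct)
  case less
  show ?case
  proof (cases "S = {}")
    case True then show ?thesis by simp
  next
    case False
    then obtain x where x: "x \<in> S" by blast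
    define d where "d = (LEAST k. k > 0 \<and> (\<sigma>^^k) x = x)"
    obtain k0 where "k0 > 0 \<and> (\<sigma>^^k0) x = x"
      using period_exists[OF less.prems(1-3) x] by blast
    then have d: "d > 0" "(\<sigma>^^d) x = x"
      unfolding d_def by (metis (mono_tags, lifting) LeastI)+
    have dmin: "\<And>k. 0 < k \<Longrightarrow> k < d \<Longrightarrow> (\<sigma>^^k) x \<noteq> x"
      unfolding d_def using not_less_Least by blast
    define Orb where "Orb = (\<lambda>i. (\<sigma>^^i) x) ` {..<d}"
    have inj: "inj_on (\<lambda>i. (\<sigma>^^i) x) {..<d}"
    proof (rule inj_onI, rule ccontr)
      fix i j assume ij: "i \<in> {..<d}" "j \<in> {..<d}" "(\<sigma>^^i) x = (\<sigma>^^j) x" "i \<noteq> j"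
      have "\<exists>i j. i < j \<and> j < d \<and> (\<sigma>^^i) x = (\<sigma>^^j) x"
      proof (cases "i < j")
        case True with ij show ?thesis by auto
      next
        case False with ij have "j < i" by simp
        with ij show ?thesis by (intro exI[of _ j] exI[of _ i]) simp
      qed
      then obtain i j where ij: "i < j" "j < d" "(\<sigma>^^i) x = (\<sigma>^^j) x" by blast
      then have "(\<sigma>^^i) x = (\<sigma>^^i) ((\<sigma>^^(j-i)) x)"
        using funpow_add[of i "j-i" \<sigma>] by (simp add: less_imp_le)
      then have "x = (\<sigma>^^(j-i)) x"
        using funpow_cancel[OF less.prems(2,3) x funpow_in[OF less.prems(2) x]] by blast
      moreover have "j - i < d" "0 < j - i" using ij by auto
      ultimately show False using dmin[of "j-i"] by simp
    qed
    have cardO: "card Orb = d" unfolding Orb_def using inj card_image by fastforce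
    have OS: "Orb \<subseteq> S" unfolding Orb_def using funpow_in[OF less.prems(2) x] by blast
    have xO: "x \<in> Orb" unfolding Orb_def using d by (auto intro!: image_eqI[of _ _ 0])
    have inv: "\<sigma> ` (S - Orb) \<subseteq> S - Orb"
    proof
      fix z assume "z \<in> \<sigma> ` (S - Orb)"
      then obtain y where y: "y \<in> S" "y \<notin> Orb" "z = \<sigma> y" by blast
      have zS: "z \<in> S" using y less.prems(2) by blast
      show "z \<in> S - Orb"
      proof (rule ccontr)
        assume "z \<notin> S - Orb"
        then have "z \<in> Orb" using zS by blast
        then obtain i where i: "i < d" "z = (\<sigma>^^i) x" unfolding Orb_def by blast
        define i' where "i' = (if i = 0 then d - 1 else i - 1)"
        have "i' < d" using i d unfolding i'_def by auto
        have "\<sigma> ((\<sigma>^^i') x) = z"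
        proof (cases "i = 0")
          case True
          obtain d' where "d = Suc d'" using d by (cases d) auto
          then show ?thesis using True i d unfolding i'_def by simp
        next
          case False
          then obtain i0 where "i = Suc i0" by (cases i) auto
          then show ?thesis using i unfolding i'_def by simp
        qed
        then have "y = (\<sigma>^^i') x"
          using y less.prems(3) funpow_in[OF less.prems(2) x] by (auto dest: inj_onD)
        then show False using y `i' < d` unfolding Orb_def by blast
      qed
    qed
    have "card (S - Orb) < card S"
      using xO x less.prems(1) by (intro psubset_card_mono) auto
    then have "m dvd card (S - Orb)"
    proof (rule less.hyps[of "S - Orb"])
      show "finite (S - Orb)" using less.prems(1) by simp
      show "inj_on \<sigma> (S - Orb)" using less.prems(3) by (rule inj_on_subset) blast
      show "\<forall>x\<in>S - Orb. \<forall>k>0. (\<sigma> ^^ k) x = x \<longrightarrow> m dvd k" using less.prems(4) by blast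
    qed (use inv in auto)
    moreover have "m dvd d" using less.prems(4) x d by blast
    moreover have "card S = card Orb + card (S - Orb)"
      using OS less.prems(1) card_Diff_subset[of Orb S] card_mono[of S Orb] finite_subset[of Orb S] by linarith
    ultimately show ?thesis using cardO by simp
  qed
qed


lemma pow_card_field: "(x::'a::{finite,field}) ^ CARD('a) = x"
proof (cases "x = 0")
  case True then show ?thesis by simp
next
  case False
  let ?U = "UNIV - {0::'a}"
  have bij: "bij_betw (\<lambda>y. x*y) ?U ?U"
    by (rule bij_betwI[where g="\<lambda>y. y/x"]) (use False in auto)
  have "prod (\<lambda>y. x*y) ?U = prod id ?U"
    using prod.reindex_bij_betw[OF bij, of id] by simp
  moreover have "prod (\<lambda>y. x*y) ?U = x ^ card ?U * prod id ?U"
    by (simp add: prod.distrib)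
  moreover have "prod id ?U \<noteq> 0" by simp
  ultimately have "x ^ card ?U = 1" by auto
  moreover have "card ?U = CARD('a) - 1" by (simp add: card_Diff_singleton)
  moreover have "CARD('a) > 0" by simp
  ultimately show ?thesis
    by (metis One_nat_def Suc_pred mult.right_neutral power_Suc)
qed

lemma card_field_ge2: "CARD('a::{finite,field}) \<ge> 2"
proof -
  have "card {0::'a, 1} \<le> CARD('a)" by (rule card_mono) auto
  then show ?thesis by simp
qed

theorem lemma3p3:
  fixes p f N :: nat and \<gamma> :: "'a::{finite,field}"
  assumes "prime p" and "of_nat p = (0::'a)" and "CARD('a) = p ^ f"
    and "N > 1" and "N dvd (CARD('a) - 1)"
    and "primitive_elem \<gamma>"
  defines "\<eta> \<equiv> gauss_period p f N \<gamma>"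
  defines "Vals \<equiv> \<eta> ` {0..<N}"
  defines "I \<equiv> (\<lambda>\<alpha>. {a\<in>{0..<N}. \<eta> a = \<alpha>})"
  shows "(\<forall>\<alpha>\<in>Vals. \<forall>a\<in>I \<alpha>. (p * a) mod N \<in> I \<alpha>)
       \<and> (let m = Gcd {ord n p | n. n > 1 \<and> n dvd N} in
            m \<ge> 2 \<longrightarrow>
            (\<exists>!\<alpha>0\<in>Vals. card (I \<alpha>0) mod m = 1 \<and>
                (\<forall>\<alpha>\<in>Vals. \<alpha> \<noteq> \<alpha>0 \<longrightarrow> card (I \<alpha>) mod m = 0)))"
proof -
  note pr = assms(1) and cardq = assms(3) and N1 = assms(4) and Ndvd = assms(5)
  have p1: "p > 1" using pr prime_gt_1_nat by blast
  have f1: "f \<ge> 1"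
  proof (rule ccontr)
    assume "\<not> f \<ge> 1" then have "CARD('a) = 1" using cardq by simp
    then show False using card_field_ge2[where 'a='a] by simp
  qed
  have frob_id: "(x^p)^(p^(f-1)) = x" for x :: 'a
  proof -
    have "p * p^(f-1) = p^f" using f1 by (metis Suc_diff_1 less_le_trans power_Suc zero_less_one)
    then have "(x^p)^(p^(f-1)) = x ^ CARD('a)" using cardq by (simp add: power_mult[symmetric])
    then show ?thesis using pow_card_field by simp
  qed
  have frob_inj: "inj (\<lambda>x::'a. x^p)"
    by (rule injI) (metis frob_id)
  have trace_inv: "abs_trace p f (x^p) = abs_trace p f x" for x :: 'a
  proof -
    let ?g = "\<lambda>i. x ^ (p ^ i)"
    have 1: "abs_trace p f (x^p) = (\<Sum>i<f. ?g (Suc i))"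
      unfolding abs_trace_def by (simp add: power_mult[symmetric])
    have 2: "(\<Sum>i<Suc f. ?g i) = ?g 0 + (\<Sum>i<f. ?g (Suc i))"
      by (rule sum.lessThan_Suc_shift)
    have 3: "(\<Sum>i<Suc f. ?g i) = (\<Sum>i<f. ?g i) + ?g f" by simp
    have 4: "?g f = x" using pow_card_field cardq by metis
    have 5: "?g 0 = x" by simp
    show ?thesis using 1 2 3 4 5 unfolding abs_trace_def by (simp add: add.commute)
  qed
  have psi_inv: "can_add_char p f (x^p) = can_add_char p f x" for x :: 'a
    unfolding can_add_char_def trace_nat_def using trace_inv by simp
  have g0: "\<gamma> \<noteq> 0"
  proof -
    have "\<gamma>^1 \<in> range (\<lambda>k::nat. \<gamma> ^ k)" by blast
    then show ?thesis using assms(6) unfolding primitive_elem_def by auto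
  qed
  define A where "A b = (\<lambda>c. \<gamma> ^ b * c) ` cyclo_C0 N \<gamma>" for b :: nat
  have cardA: "card (A b) = card (cyclo_C0 N \<gamma>)" for b
    unfolding A_def by (rule card_image) (use g0 in \<open>auto intro: inj_onI\<close>)
  have sub: "(\<lambda>x. x^p) ` A a \<subseteq> A ((p*a) mod N)" for a
  proof
    fix y assume "y \<in> (\<lambda>x. x^p) ` A a"
    then obtain j where y: "y = (\<gamma>^a * (\<gamma>^N)^j)^p" unfolding A_def cyclo_C0_def by auto
    have pa: "p*a = (p*a) mod N + N * ((p*a) div N)" by simp
    have "y = \<gamma>^(p*a) * (\<gamma>^N)^(p*j)"
      unfolding y by (simp add: power_mult_distrib power_mult[symmetric] ac_simps)
    also have "\<gamma>^(p*a) = \<gamma>^((p*a) mod N + N * ((p*a) div N))"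
      using arg_cong[OF pa, of "\<lambda>e. \<gamma>^e"] by simp
    also have "\<dots> = \<gamma>^((p*a) mod N) * (\<gamma>^N)^((p*a) div N)"
      by (simp only: power_add power_mult)
    finally have "y = \<gamma>^((p*a) mod N) * (\<gamma>^N)^((p*a) div N + p*j)"
      by (simp add: power_add mult.assoc)
    then show "y \<in> A ((p*a) mod N)" unfolding A_def cyclo_C0_def by blast
  qed
  have eqA: "(\<lambda>x. x^p) ` A a = A ((p*a) mod N)" for a
  proof (rule card_subset_eq)
    show "finite (A ((p*a) mod N))" by simp
    show "card ((\<lambda>x. x^p) ` A a) = card (A ((p*a) mod N))"
      using cardA card_image[OF inj_on_subset[OF frob_inj]] by simp
  qed (rule sub)
  have eta_inv: "\<eta> ((p*a) mod N) = \<eta> a" for a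
  proof -
    have "\<eta> ((p*a) mod N) = sum (can_add_char p f) (A ((p*a) mod N))"
      unfolding \<eta>_def gauss_period_def A_def ..
    also have "\<dots> = sum (can_add_char p f) ((\<lambda>x. x^p) ` A a)" by (simp add: eqA)
    also have "\<dots> = sum (\<lambda>x. can_add_char p f (x^p)) (A a)"
      by (subst sum.reindex) (use inj_on_subset[OF frob_inj] in auto)
    also have "\<dots> = \<eta> a"
      unfolding \<eta>_def gauss_period_def A_def psi_inv ..
    finally show ?thesis .
  qed
  have part1: "\<forall>\<alpha>\<in>Vals. \<forall>a\<in>I \<alpha>. (p * a) mod N \<in> I \<alpha>"
    unfolding I_def using eta_inv N1 by auto
  have copN: "coprime p N"
  proof (rule prime_imp_coprime[OF pr], rule notI)
    assume "p dvd N"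
    then have "p dvd p^f - 1" using Ndvd cardq dvd_trans by metis
    moreover have "p dvd p^f" using f1 by (simp add: dvd_power)
    ultimately have "p dvd p^f - (p^f - 1)" by (rule dvd_diff_nat[rotated])
    moreover have "p^f - (p^f - 1) = 1" using p1 by simp
    ultimately show False using pr by simp
  qed
  define m where "m = Gcd {ord n p | n. n > 1 \<and> n dvd N}"
  define \<sigma> where "\<sigma> a = (p*a) mod N" for a
  have sig_pow: "(\<sigma>^^k) a = (a * p^k) mod N" if "a < N" for a k
  proof (induction k)
    case 0 then show ?case using that by simp
  next
    case (Suc k)
    have "(\<sigma>^^Suc k) a = \<sigma> ((\<sigma>^^k) a)" by simp
    also have "\<dots> = \<sigma> ((a * p^k) mod N)" using Suc by simp
    also have "\<dots> = (p * ((a * p^k) mod N)) mod N" by (simp add: \<sigma>_def)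
    also have "\<dots> = (p * (a * p^k)) mod N" by (simp add: mod_mult_right_eq)
    finally show ?case by (simp add: ac_simps)
  qed
  have period: "m dvd k" if a: "0 < a" "a < N" and k: "k > 0" "(a * p^k) mod N = a" for a k
  proof -
    have pk: "p^k \<ge> 1" using p1 by simp
    have "[a * p^k = a] (mod N)" using k a by (simp add: cong_def)
    then have "N dvd a * p^k - a" using pk by (subst (asm) cong_altdef_nat) auto
    then have Nd: "N dvd a * (p^k - 1)" by (simp add: diff_mult_distrib2)
    define g where "g = gcd a N"
    define n where "n = N div g"
    define a' where "a' = a div g"
    have g0: "g > 0" using a unfolding g_def by simp
    have Ngn: "N = g * n" unfolding n_def g_def by simp
    have aga: "a = g * a'" unfolding a'_def g_def by simp
    have cop: "coprime n a'" unfolding n_def a'_def g_def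
      using div_gcd_coprime[of a N] a by (simp add: ac_simps coprime_commute)
    have "g * n dvd g * (a' * (p^k - 1))" using Nd Ngn aga by (simp add: mult.assoc)
    then have "n dvd a' * (p^k - 1)" using g0 by simp
    then have "n dvd p^k - 1" using cop by (simp add: coprime_dvd_mult_right_iff)
    then have "[p^k = 1] (mod n)" using pk by (subst cong_altdef_nat) auto
    then have od: "ord n p dvd k" by (simp add: ord_divides')
    have "g \<le> a" unfolding g_def using a by simp
    then have n1: "n > 1" using Ngn a g0
      by (metis less_le_trans mult.right_neutral mult_le_mono2 not_le order.strict_iff_not linorder_not_less
          le_neq_implies_less less_one nat_mult_eq_cancel1 mult_0_right)
    have "n dvd N" using Ngn by simp
    then have "m dvd ord n p" unfolding m_def using n1 by (intro Gcd_dvd) blast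
    then show ?thesis using od dvd_trans by blast
  qed
  have cardI: "card (I \<alpha>) = card (I \<alpha> - {0}) + (if \<eta> 0 = \<alpha> then 1 else 0)"
    and dvdS: "m dvd card (I \<alpha> - {0})" for \<alpha>
  proof -
    have finI: "finite (I \<alpha>)" unfolding I_def by simp
    show "card (I \<alpha>) = card (I \<alpha> - {0}) + (if \<eta> 0 = \<alpha> then 1 else 0)"
    proof (cases "\<eta> 0 = \<alpha>")
      case True
      then have "0 \<in> I \<alpha>" unfolding I_def using N1 by simp
      moreover have "card (I \<alpha>) > 0" using finI \<open>0 \<in> I \<alpha>\<close> card_gt_0_iff by blast
      ultimately show ?thesis using finI True by (simp add: card_Diff_singleton)
    next
      case False
      then have "0 \<notin> I \<alpha>" unfolding I_def by simp
      then show ?thesis using False by simp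
    qed
    let ?S = "I \<alpha> - {0}"
    show "m dvd card ?S"
    proof (rule perm_cycles_dvd[of ?S \<sigma>])
      show "finite ?S" using finI by simp
      show "\<sigma> ` ?S \<subseteq> ?S"
      proof
        fix b assume "b \<in> \<sigma> ` ?S"
        then obtain a where a: "a \<in> I \<alpha>" "a \<noteq> 0" "b = \<sigma> a" by blast
        have aN: "a < N" using a unfolding I_def by simp
        have "b \<in> I \<alpha>" using a eta_inv N1 unfolding I_def \<sigma>_def by auto
        moreover have "b \<noteq> 0"
        proof
          assume "b = 0"
          then have "N dvd p * a" using a unfolding \<sigma>_def by (simp add: mod_eq_0_iff_dvd)
          then have "N dvd a" using copN coprime_dvd_mult_right_iff[of N p a] coprime_commute by blast
          then show False using a aN by (simp add: nat_dvd_not_less)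
        qed
        ultimately show "b \<in> ?S" by simp
      qed
      show "inj_on \<sigma> ?S"
      proof (rule inj_onI)
        fix a b assume ab: "a \<in> ?S" "b \<in> ?S" "\<sigma> a = \<sigma> b"
        then have "[p*a = p*b] (mod N)" unfolding \<sigma>_def cong_def by simp
        then have "[a = b] (mod N)" using cong_mult_lcancel_nat[OF copN] by simp
        then show "a = b" using ab unfolding I_def cong_def by simp
      qed
      show "\<forall>x\<in>?S. \<forall>k>0. (\<sigma>^^k) x = x \<longrightarrow> m dvd k"
      proof (intro ballI allI impI)
        fix x k assume x: "x \<in> ?S" and k: "k > 0" "(\<sigma>^^k) x = x"
        have xN: "x < N" "0 < x" using x unfolding I_def by auto
        show "m dvd k" using period[OF xN(2,1) k(1)] k(2) sig_pow[OF xN(1)] by simp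
      qed
    qed
  qed
  have part2: "m \<ge> 2 \<longrightarrow>
            (\<exists>!\<alpha>0\<in>Vals. card (I \<alpha>0) mod m = 1 \<and>
                (\<forall>\<alpha>\<in>Vals. \<alpha> \<noteq> \<alpha>0 \<longrightarrow> card (I \<alpha>) mod m = 0))"
  proof
    assume m2: "m \<ge> 2"
    have c0: "card (I (\<eta> 0)) mod m = 1"
    proof -
      obtain c where c: "card (I (\<eta> 0) - {0}) = m * c" using dvdS[of "\<eta> 0"] by blast
      have "card (I (\<eta> 0)) = m * c + 1" using cardI[of "\<eta> 0"] c by simp
      moreover have "(m * c + 1) mod m = 1" using m2 by (simp add: mod_Suc)
      ultimately show ?thesis by simp
    qed
    have c1: "card (I \<alpha>) mod m = 0" if "\<alpha> \<noteq> \<eta> 0" for \<alpha>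
      using cardI[of \<alpha>] dvdS[of \<alpha>] that by auto
    have v0: "\<eta> 0 \<in> Vals" unfolding Vals_def using N1 by auto
    show "\<exists>!\<alpha>0\<in>Vals. card (I \<alpha>0) mod m = 1 \<and>
                (\<forall>\<alpha>\<in>Vals. \<alpha> \<noteq> \<alpha>0 \<longrightarrow> card (I \<alpha>) mod m = 0)"
    proof (rule ex1I[of _ "\<eta> 0"])
      show "\<eta> 0 \<in> Vals \<and> card (I (\<eta> 0)) mod m = 1 \<and>
           (\<forall>\<alpha>\<in>Vals. \<alpha> \<noteq> \<eta> 0 \<longrightarrow> card (I \<alpha>) mod m = 0)"
        using v0 c0 c1 by blast
    next
      fix \<beta> assume "\<beta> \<in> Vals \<and> card (I \<beta>) mod m = 1 \<and>
           (\<forall>\<alpha>\<in>Vals. \<alpha> \<noteq> \<beta> \<longrightarrow> card (I \<alpha>) mod m = 0)"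
      then show "\<beta> = \<eta> 0" using c1 by force
    qed
  qed
  show ?thesis using part1 part2 unfolding m_def Let_def by blast
qed

end
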